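(* If $M$ is a uniformly dense loopless matroid containing a circuit, then $\operatorname{gir}(M)\ge\rho(M)/(\rho(M)-1)$.
   Context: For a matroid on $E$, $\operatorname{rank}(A)=\max_B|A\cap B|$ over bases, $\rho(A)=|A|/\operatorname{rank}(A)$, $\rho(M)=\rho(E)$; $M$ is uniformly dense if $\rho(A)\le\rho(E)$ for all nonempty $A\subseteq E$. A circuit is a subset $C\subseteq E$ with $\operatorname{rank}(C)=|C|-1$ and $\operatorname{rank}(S)=|S|$ for every proper subset $S\subset C$; $\operatorname{gir}(M)$ is the size of a smallest circuit. *)

theory Defs
  imports Main Complex_Main
begin

text \<open>A (finite) matroid on ground set E, given by its family of bases Bs
  (basis-exchange axiom).\<close>
definition matroid :: "'a set \<Rightarrow> 'a set set \<Rightarrow> bool" where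
  "matroid E Bs \<longleftrightarrow> finite E \<and> Bs \<noteq> {} \<and> (\<forall>X\<in>Bs. X \<subseteq> E) \<and>
     (\<forall>X\<in>Bs. \<forall>Y\<in>Bs. \<forall>x\<in>X - Y. \<exists>y\<in>Y - X. insert y (X - {x}) \<in> Bs)"

definition mrank :: "'a set set \<Rightarrow> 'a set \<Rightarrow> nat" where
  "mrank Bs A = Max ((\<lambda>X. card (A \<inter> X)) ` Bs)"

definition density :: "'a set set \<Rightarrow> 'a set \<Rightarrow> real" where
  "density Bs A = real (card A) / real (mrank Bs A)"

definition uniformly_dense :: "'a set \<Rightarrow> 'a set set \<Rightarrow> bool" where
  "uniformly_dense E Bs \<longleftrightarrow> (\<forall>A. A \<subseteq> E \<and> A \<noteq> {} \<longrightarrow> density Bs A \<le> density Bs E)"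

definition loopless :: "'a set \<Rightarrow> 'a set set \<Rightarrow> bool" where
  "loopless E Bs \<longleftrightarrow> (\<forall>e\<in>E. mrank Bs {e} \<noteq> 0)"

text \<open>rank(C) = |C| - 1 (as integers, so C is nonempty) and every proper subset is independent.\<close>
definition circuit :: "'a set \<Rightarrow> 'a set set \<Rightarrow> 'a set \<Rightarrow> bool" where
  "circuit E Bs C \<longleftrightarrow> C \<subseteq> E \<and> mrank Bs C + 1 = card C \<and>
     (\<forall>S. S \<subset> C \<longrightarrow> mrank Bs S = card S)"

definition girth :: "'a set \<Rightarrow> 'a set set \<Rightarrow> nat" where
  "girth E Bs = Min (card ` {C. circuit E Bs C})"

end

theory Submission
  imports Defs
begin

theorem proposition3p9:
  assumes "matroid E Bs"
    and "uniformly_dense E Bs"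
    and "loopless E Bs"
    and "\<exists>C. circuit E Bs C"
  shows "real (girth E Bs) \<ge> density Bs E / (density Bs E - 1)"
proof -
  have fin: "finite E" using assms(1) by (simp add: matroid_def)
  let ?S = "card ` {C. circuit E Bs C}"
  have "?S \<subseteq> {..card E}"
    using fin by (auto simp: circuit_def intro: card_mono)
  hence finS: "finite ?S" using finite_subset by blast
  have neS: "?S \<noteq> {}" using assms(4) by blast
  have "girth E Bs \<in> ?S" unfolding girth_def using Min_in[OF finS neS] .
  hence "\<exists>C. circuit E Bs C \<and> card C = girth E Bs" by (auto simp: image_iff Bex_def)
  then obtain C where C: "circuit E Bs C" and g: "card C = girth E Bs" by blast
  have CE: "C \<subseteq> E" and rk: "mrank Bs C + 1 = card C" using C by (auto simp: circuit_def)
  have g2: "card C \<ge> 2"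
  proof (rule ccontr)
    assume "\<not> card C \<ge> 2"
    with rk have "card C = 1" by linarith
    then obtain e where "C = {e}" by (auto simp: card_Suc_eq)
    with rk CE assms(3) show False by (auto simp: loopless_def)
  qed
  have Cne: "C \<noteq> {}" using g2 by auto
  define r where "r = density Bs E"
  define x where "x = real (card C)"
  have x2: "x \<ge> 2" using g2 x_def by simp
  have dC: "density Bs C = x / (x - 1)"
    unfolding density_def x_def using rk by (simp add: of_nat_diff flip: rk)
  have le: "x / (x - 1) \<le> r" 
  proof -
    have "density Bs C \<le> density Bs E" using assms(2) CE Cne unfolding uniformly_dense_def by blast
    thus ?thesis using dC r_def by simp
  qed
  have "x \<le> r * (x - 1)" using le x2 by (simp add: divide_le_eq)
  have r1: "r > 1"
  proof (rule ccontr)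
    assume "\<not> r > 1"
    hence "r * (x - 1) \<le> 1 * (x - 1)" using x2 by (intro mult_right_mono) auto
    hence "x \<le> x - 1" using \<open>x \<le> r * (x - 1)\<close> by simp
    thus False by simp
  qed
  have "r / (r - 1) \<le> x" using r1 \<open>x \<le> r * (x - 1)\<close> by (simp add: divide_le_eq algebra_simps)
  thus ?thesis using g x_def r_def by simp
qed

end
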